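(* Let $n\ge2$ and $\mathcal G_n$, $\mathcal N_{0,n}$, $z_g$, $U_m(z_g)$ as in the context. Let $f\in A_{\mathbb C}(\mathcal G_n)$ and suppose there is $m\in\mathbb N$ such that $$f=\sum_{g\in\mathcal N_{0,n}}c_g1_{U_m(z_g)},\qquad c_g\in\mathbb C.$$ If $f(z_e)\neq0$, then $|f(z)|>|f(z_e)|/2^n$ for all $z$ in a set with nonempty interior; in particular $f\notin S_{\mathbb C}(\mathcal G_n)$.
   Context: Let $X=\{\mathbf 0,\mathbf 1\}$, $X^*$ the finite words (with empty word $\varnothing$), $X^\omega$ the infinite words, $C(\eta)=\{\eta w:w\in X^\omega\}$, $\mathbf 1^m$ and $\mathbf 1^\infty$ the finite/infinite words of ones. Fix $n\ge2$, a primitive polynomial $f_n$ of degree $n$ over $\mathbb F_2$ with root $\alpha$, and $\operatorname{Tr}(\beta)=\beta+\beta^2+\dots+\beta^{2^{n-1}}\in\mathbb F_2$. $\mathfrak G_n$ is the group of automorphisms of the binary rooted tree $X^*$ generated by $a$ ($a\cdot(\mathbf 0w)=\mathbf 1w$, $a\cdot(\mathbf 1w)=\mathbf 0w$) and $\iota_n(\beta)$, $\beta\in\mathbb F_{2^n}$, where $\iota_n(\beta)\cdot(\mathbf 0w)=\mathbf 0(a^{\operatorname{Tr}(\beta)}\cdot w)$, $\iota_n(\beta)\cdot(\mathbf 1w)=\mathbf 1(\iota_n(\alpha\beta)\cdot w)$; restrictions $g|_x$ are given by $g\cdot(xw)=(g\cdot x)(g|_x\cdot w)$. $\mathcal N_{0,n}=\iota_n(\mathbb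 F_{2^n})$, $e=\iota_n(0)$. $\mathcal G_n$ is the groupoid of germs of the action of the inverse semigroup $\{(\eta,g,\mu)\}\cup\{0\}$ on $X^\omega$ with $(\eta,g,\mu):C(\mu)\to C(\eta)$, $\mu w\mapsto\eta(g\cdot w)$; germs $[(\eta,g,\mu),w]$, $w\in C(\mu)$, with $[(\eta,g,\mu),w]=[(\eta',g',\mu'),w']$ iff $w=w'$ and some finite prefix $\nu=\mu\epsilon=\mu'\epsilon'$ of $w$ satisfies $\eta(g\cdot\epsilon)=\eta'(g'\cdot\epsilon')$ and $g|_\epsilon=g'|_{\epsilon'}$. $\Theta(s,U)=\{[s,w]:w\in U\}$ for $s=(\eta,g,\mu)$, $U\subseteq C(\mu)$ open; these form a basis of the topology. $z_g=[(\varnothing,g,\varnothing),\mathbf 1^\infty]$ and $U_m(z_g)=\Theta((\varnothing,g,\varnothing),C(\mathbf 1^m))$. $A_{\mathbb C}(\mathcal G_n)$ is the complex Steinberg algebra (span of characteristic functions of compact open bisections), and $S_{\mathbb C}(\mathcal G_n)$ its ideal of singular functions, i.e. those $f$ whose support $\{x:f(x)\neq0\}$ has empty interior. *)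

theory Defs
  imports "HOL-Analysis.Analysis"
begin

text \<open>Finite words over X = {0,1} are bool lists (False = 0, True = 1);
  infinite words are functions nat => bool; tree automorphisms act on finite words.\<close>

type_synonym word = "bool list"
type_synonym iword = "nat \<Rightarrow> bool"
type_synonym tauto = "word \<Rightarrow> word"
type_synonym triple = "word \<times> tauto \<times> word"
type_synonym germ = "(triple \<times> iword) set"

definition primitive_elem :: "'k::{field,finite} \<Rightarrow> bool" where
  "primitive_elem \<alpha> \<longleftrightarrow> \<alpha> \<noteq> 0 \<and> (\<forall>k::nat. 0 < k \<and> k < CARD('k) - 1 \<longrightarrow> \<alpha> ^ k \<noteq> 1)"

text \<open>Trace F_{2^n} -> F_2, as a boolean (True iff Tr beta = 1).\<close>
definition tr :: "nat \<Rightarrow> 'k::field \<Rightarrow> bool" where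
  "tr n \<beta> \<longleftrightarrow> (\<Sum>i<n. \<beta> ^ (2 ^ i)) \<noteq> 0"

fun aact :: "word \<Rightarrow> word" where
  "aact [] = []"
| "aact (x # w) = (\<not> x) # w"

fun iact :: "nat \<Rightarrow> 'k::field \<Rightarrow> 'k \<Rightarrow> word \<Rightarrow> word" where
  "iact n \<alpha> \<beta> [] = []"
| "iact n \<alpha> \<beta> (x # w) =
     (if x then True # iact n \<alpha> (\<alpha> * \<beta>) w
      else False # (if tr n \<beta> then aact w else w))"

inductive_set Ggrp :: "nat \<Rightarrow> 'k::field \<Rightarrow> tauto set" for n \<alpha> where
  grp_id: "id \<in> Ggrp n \<alpha>"
| grp_a: "aact \<in> Ggrp n \<alpha>"
| grp_iota: "iact n \<alpha> \<beta> \<in> Ggrp n \<alpha>"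
| grp_comp: "g \<in> Ggrp n \<alpha> \<Longrightarrow> h \<in> Ggrp n \<alpha> \<Longrightarrow> g \<circ> h \<in> Ggrp n \<alpha>"
| grp_inv: "g \<in> Ggrp n \<alpha> \<Longrightarrow> inv g \<in> Ggrp n \<alpha>"

text \<open>Restriction g|_eps, defined by g(eps w) = g(eps) g|_eps(w).\<close>
definition restr :: "tauto \<Rightarrow> word \<Rightarrow> tauto" where
  "restr g \<epsilon> = (\<lambda>w. drop (length \<epsilon>) (g (\<epsilon> @ w)))"

definition ptake :: "iword \<Rightarrow> nat \<Rightarrow> word" where
  "ptake w k = map w [0..<k]"

definition conc :: "word \<Rightarrow> iword \<Rightarrow> iword" where
  "conc \<eta> w = (\<lambda>i. if i < length \<eta> then \<eta> ! i else w (i - length \<eta>))"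

definition ishift :: "nat \<Rightarrow> iword \<Rightarrow> iword" where
  "ishift k w = (\<lambda>i. w (i + k))"

definition act_inf :: "tauto \<Rightarrow> iword \<Rightarrow> iword" where
  "act_inf g w = (\<lambda>i. g (ptake w (Suc i)) ! i)"

definition cyl :: "word \<Rightarrow> iword set" where
  "cyl \<eta> = {w. ptake w (length \<eta>) = \<eta>}"

definition ones :: iword where "ones = (\<lambda>_. True)"

definition openX :: "iword set \<Rightarrow> bool" where
  "openX U \<longleftrightarrow> (\<forall>w\<in>U. \<exists>k. cyl (ptake w k) \<subseteq> U)"

definition valid_rep :: "nat \<Rightarrow> 'k::field \<Rightarrow> triple \<times> iword \<Rightarrow> bool" where
  "valid_rep n \<alpha> r \<longleftrightarrow> (case r of ((\<eta>, g, \<mu>), w) \<Rightarrow> g \<in> Ggrp n \<alpha> \<and> w \<in> cyl \<mu>)"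

definition germ_rel :: "triple \<times> iword \<Rightarrow> triple \<times> iword \<Rightarrow> bool" where
  "germ_rel r r' \<longleftrightarrow> (case r of ((\<eta>, g, \<mu>), w) \<Rightarrow> case r' of ((\<eta>', g', \<mu>'), w') \<Rightarrow>
     w = w' \<and> (\<exists>\<epsilon> \<epsilon>'. \<mu> @ \<epsilon> = \<mu>' @ \<epsilon>' \<and> ptake w (length (\<mu> @ \<epsilon>)) = \<mu> @ \<epsilon>
        \<and> \<eta> @ g \<epsilon> = \<eta>' @ g' \<epsilon>' \<and> restr g \<epsilon> = restr g' \<epsilon>'))"

definition germ_of :: "nat \<Rightarrow> 'k::field \<Rightarrow> triple \<times> iword \<Rightarrow> germ" where
  "germ_of n \<alpha> r = {r'. valid_rep n \<alpha> r' \<and> germ_rel r r'}"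

definition Gn :: "nat \<Rightarrow> 'k::field \<Rightarrow> germ set" where
  "Gn n \<alpha> = {germ_of n \<alpha> r | r. valid_rep n \<alpha> r}"

definition Theta :: "nat \<Rightarrow> 'k::field \<Rightarrow> triple \<Rightarrow> iword set \<Rightarrow> germ set" where
  "Theta n \<alpha> s U = {germ_of n \<alpha> (s, w) | w. w \<in> U}"

definition basis :: "nat \<Rightarrow> 'k::field \<Rightarrow> germ set set" where
  "basis n \<alpha> = {Theta n \<alpha> (\<eta>, g, \<mu>) U | \<eta> g \<mu> U.
      g \<in> Ggrp n \<alpha> \<and> U \<subseteq> cyl \<mu> \<and> openX U}"

definition Gtop :: "nat \<Rightarrow> 'k::field \<Rightarrow> germ topology" where
  "Gtop n \<alpha> = topology_generated_by (basis n \<alpha>)"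

definition src :: "germ \<Rightarrow> iword" where
  "src x = snd (SOME r. r \<in> x)"

definition rng :: "germ \<Rightarrow> iword" where
  "rng x = (case (SOME r. r \<in> x) of ((\<eta>, g, \<mu>), w) \<Rightarrow>
      conc \<eta> (act_inf g (ishift (length \<mu>) w)))"

definition bisection :: "nat \<Rightarrow> 'k::field \<Rightarrow> germ set \<Rightarrow> bool" where
  "bisection n \<alpha> B \<longleftrightarrow> B \<subseteq> Gn n \<alpha> \<and> inj_on src B \<and> inj_on rng B"

definition compact_open_bisection :: "nat \<Rightarrow> 'k::field \<Rightarrow> germ set \<Rightarrow> bool" where
  "compact_open_bisection n \<alpha> B \<longleftrightarrow>
     bisection n \<alpha> B \<and> openin (Gtop n \<alpha>) B \<and> compactin (Gtop n \<alpha>) B"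

definition AC :: "nat \<Rightarrow> 'k::field \<Rightarrow> (germ \<Rightarrow> complex) set" where
  "AC n \<alpha> = {f. \<exists>Bs :: (germ set \<times> complex) list.
      (\<forall>(B, c) \<in> set Bs. compact_open_bisection n \<alpha> B) \<and>
      f = (\<lambda>x. \<Sum>(B, c) \<leftarrow> Bs. c * indicator B x)}"

definition SC :: "nat \<Rightarrow> 'k::field \<Rightarrow> (germ \<Rightarrow> complex) set" where
  "SC n \<alpha> = {f \<in> AC n \<alpha>. Gtop n \<alpha> interior_of {x. f x \<noteq> 0} = {}}"

definition z_germ :: "nat \<Rightarrow> 'k::field \<Rightarrow> tauto \<Rightarrow> germ" where
  "z_germ n \<alpha> g = germ_of n \<alpha> (([], g, []), ones)"

definition Um :: "nat \<Rightarrow> 'k::field \<Rightarrow> nat \<Rightarrow> tauto \<Rightarrow> germ set" where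
  "Um n \<alpha> m g = Theta n \<alpha> ([], g, []) (cyl (replicate m True))"

definition N0 :: "nat \<Rightarrow> 'k::field \<Rightarrow> tauto set" where
  "N0 n \<alpha> = range (iact n \<alpha>)"

end

theory Submission
  imports Defs "HOL-Computational_Algebra.Polynomial"
begin


lemma prim_pow_inj:
  fixes \<alpha> :: "'k::{field,finite}"
  assumes "primitive_elem \<alpha>" "i < CARD('k) - 1" "j < CARD('k) - 1" "\<alpha>^i = \<alpha>^j"
  shows "i = j"
proof (rule ccontr)
  assume ne: "i \<noteq> j"
  have a0: "\<alpha> \<noteq> 0" using assms(1) by (simp add: primitive_elem_def)
  have key: "\<And>a b. a < b \<Longrightarrow> b < CARD('k) - 1 \<Longrightarrow> \<alpha>^a = \<alpha>^b \<Longrightarrow> False"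
  proof -
    fix a b assume ab: "a < b" "b < CARD('k) - 1" "\<alpha>^a = \<alpha>^b"
    have "\<alpha>^b = \<alpha>^a * \<alpha>^(b-a)" using ab(1) by (simp add: power_add[symmetric])
    with ab(3) a0 have "\<alpha>^(b-a) = 1" by simp
    moreover have "0 < b - a" "b - a < CARD('k) - 1" using ab by auto
    ultimately show False using assms(1) by (simp add: primitive_elem_def)
  qed
  show False
  proof (cases "i < j")
    case True then show False using key assms by blast
  next
    case False then have "j < i" using ne by simp
    then show False using key assms by metis
  qed
qed

lemma prim_cover:
  fixes \<alpha> :: "'k::{field,finite}"
  assumes "primitive_elem \<alpha>" "\<gamma> \<noteq> 0"
  shows "\<exists>i < CARD('k) - 1. \<alpha>^(m+i) = \<gamma>"
proof -
  have a0: "\<alpha> \<noteq> 0" using assms(1) by (simp add: primitive_elem_def)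
  have inj: "inj_on (\<lambda>i. \<alpha>^(m+i)) {..<CARD('k) - 1}"
  proof (rule inj_onI)
    fix i j assume "i \<in> {..<CARD('k) - 1}" "j \<in> {..<CARD('k) - 1}" "\<alpha>^(m+i) = \<alpha>^(m+j)"
    then have "\<alpha>^m * \<alpha>^i = \<alpha>^m * \<alpha>^j" "i < CARD('k) - 1" "j < CARD('k) - 1"
      by (auto simp: power_add)
    then show "i = j" using a0 prim_pow_inj[OF assms(1)] by auto
  qed
  have sub: "(\<lambda>i. \<alpha>^(m+i)) ` {..<CARD('k) - 1} \<subseteq> UNIV - {0}" using a0 by auto
  have "card ((\<lambda>i. \<alpha>^(m+i)) ` {..<CARD('k) - 1}) = CARD('k) - 1"
    using card_image[OF inj] by simp
  moreover have "card (UNIV - {0::'k}) = CARD('k) - 1" by (simp add: card_Diff_singleton)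
  ultimately have "(\<lambda>i. \<alpha>^(m+i)) ` {..<CARD('k) - 1} = UNIV - {0}"
    using sub by (intro card_subset_eq) auto
  then have "\<gamma> \<in> (\<lambda>i. \<alpha>^(m+i)) ` {..<CARD('k) - 1}" using assms(2) by simp
  then show ?thesis by auto
qed

lemma prim_order:
  fixes \<alpha> :: "'k::{field,finite}"
  assumes "primitive_elem \<alpha>"
  shows "\<alpha>^(CARD('k) - 1) = 1"
proof -
  have a0: "\<alpha> \<noteq> 0" using assms(1) by (simp add: primitive_elem_def)
  obtain i where i: "i < CARD('k) - 1" "\<alpha>^(0+i) = \<alpha>^(CARD('k) - 1)"
    using prim_cover[OF assms, of "\<alpha>^(CARD('k) - 1)" 0] a0 by auto
  show ?thesis
  proof (cases "i = 0")
    case True then show ?thesis using i by simp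
  next
    case False
    have "\<alpha>^(CARD('k) - 1) = \<alpha>^i * \<alpha>^(CARD('k) - 1 - i)" using i(1)
      by (simp add: power_add[symmetric])
    with i a0 have "\<alpha>^(CARD('k) - 1 - i) = 1" by simp
    moreover have "0 < CARD('k) - 1 - i" "CARD('k) - 1 - i < CARD('k) - 1" using i False by auto
    ultimately show ?thesis using assms by (simp add: primitive_elem_def)
  qed
qed

lemma fermat:
  fixes \<alpha> x :: "'k::{field,finite}"
  assumes "primitive_elem \<alpha>" "x \<noteq> 0"
  shows "x^(CARD('k) - 1) = 1"
proof -
  obtain i where "\<alpha>^(0+i) = x" using prim_cover[OF assms] by blast
  then have "x^(CARD('k) - 1) = (\<alpha>^(CARD('k) - 1))^i"
    by (metis add_0 power_mult power_mult_distrib mult.commute)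
  then show ?thesis using prim_order[OF assms(1)] by simp
qed

lemma char2:
  fixes \<alpha> :: "'k::{field,finite}"
  assumes "primitive_elem \<alpha>" "CARD('k) = 2^n" "n \<ge> 1"
  shows "(1::'k) + 1 = 0"
proof -
  have "odd (CARD('k) - 1)" using assms(2,3) by (simp add: odd_pos)
  then have "(-1::'k)^(CARD('k) - 1) = -1" by simp
  moreover have "(-1::'k)^(CARD('k) - 1) = 1" using fermat[OF assms(1)] by simp
  ultimately have "(-1::'k) = 1" by simp
  then show ?thesis by (metis add.right_inverse)
qed

lemma fermat2:
  fixes \<alpha> x :: "'k::{field,finite}"
  assumes "primitive_elem \<alpha>"
  shows "x^(CARD('k)) = x"
proof (cases "x = 0")
  case True then show ?thesis by simp
next
  case False
  have "x^(CARD('k)) = x * x^(CARD('k) - 1)"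
    by (metis One_nat_def Suc_pred finite_UNIV_card_ge_0 finite power_Suc)
  then show ?thesis using fermat[OF assms False] by simp
qed



locale fld =
  fixes n :: nat and \<alpha> :: "'k::{field,finite}"
  assumes n2: "n \<ge> 2" and card: "CARD('k) = 2 ^ n" and prim: "primitive_elem \<alpha>"
begin

definition T :: "'k \<Rightarrow> 'k" where "T x = (\<Sum>i<n. x ^ (2 ^ i))"

lemma two0: "(1::'k) + 1 = 0" using char2[OF prim card] n2 by simp

lemma neg_self: "- (y::'k) = y"
proof -
  have "y + y = (1 + 1) * y" by (simp add: algebra_simps)
  then have "y + y = 0" using two0 by simp
  then show ?thesis by (simp add: add_eq_0_iff)
qed

lemma frob: "((x::'k) + y)^2 = x^2 + y^2"
proof -
  have "(2::'k) = 0" using two0 by simp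
  then show ?thesis by (simp add: power2_sum)
qed

lemma frob_pow: "((x::'k) + y)^(2^i) = x^(2^i) + y^(2^i)"
proof (induction i)
  case 0 then show ?case by simp
next
  case (Suc i)
  have "(x+y)^(2^Suc i) = ((x+y)^(2^i))^2" by (simp add: power_mult[symmetric] mult.commute)
  also have "\<dots> = (x^(2^i))^2 + (y^(2^i))^2" using Suc frob by simp
  also have "\<dots> = x^(2^Suc i) + y^(2^Suc i)" by (simp add: power_mult[symmetric] mult.commute)
  finally show ?case .
qed

lemma frob_sum: "(\<Sum>i\<in>A. (a i::'k))^2 = (\<Sum>i\<in>A. (a i)^2)"
proof (induction A rule: infinite_finite_induct)
  case (insert x F) then show ?case by (simp add: frob)
qed auto

lemma T_add: "T (x + y) = T x + T y"
  unfolding T_def by (simp add: frob_pow sum.distrib)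

lemma T_sq: "(T x)^2 = T x"
proof -
  have "(T x)^2 = (\<Sum>i<n. x^(2^Suc i))"
    unfolding T_def frob_sum by (simp add: power_mult[symmetric] mult.commute)
  moreover have "(\<Sum>i<Suc n. x^(2^i)) = x^(2^0) + (\<Sum>i<n. x^(2^Suc i))"
    by (rule sum.lessThan_Suc_shift)
  moreover have "(\<Sum>i<Suc n. x^(2^i)) = T x + x^(2^n)" by (simp add: T_def)
  moreover have "x^(2^n) = x" using fermat2[OF prim] card by metis
  ultimately show ?thesis by simp
qed

lemma T01: "T (x::'k) = 0 \<or> T x = 1"
proof -
  have "T x * (T x - 1) = 0" using T_sq[of x] by (simp add: power2_eq_square algebra_simps)
  then show ?thesis by simp
qed

lemma tr_T: "tr n x \<longleftrightarrow> T x \<noteq> 0" by (simp add: tr_def T_def)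

lemma tr_add: "tr n ((x::'k) + y) \<longleftrightarrow> tr n x \<noteq> tr n y"
  using T01[of x] T01[of y] two0 by (auto simp: tr_T T_add)

lemma tr_diff: "tr n ((x::'k) - y) \<longleftrightarrow> tr n x \<noteq> tr n y"
proof -
  have "x - y = x + y" using neg_self[of y] by (metis diff_conv_add_uminus)
  then show ?thesis using tr_add[of x y] by metis
qed

lemma tr_zero: "\<not> tr n (0::'k)" by (simp add: tr_T T_def power_0_left)

lemma tr_exists: "\<exists>x0::'k. tr n x0"
proof (rule ccontr)
  assume "\<not> ?thesis"
  then have all: "\<And>x. T x = 0" by (simp add: tr_T)
  define p :: "'k poly" where "p = (\<Sum>i<n. monom 1 (2^i))"
  have pT: "poly p x = T x" for x by (simp add: p_def T_def poly_sum poly_monom)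
  have "coeff p 1 = (\<Sum>i<n. if i = 0 then 1 else 0)"
    unfolding p_def coeff_sum coeff_monom by (intro sum.cong) auto
  also have "\<dots> = 1" using n2 by simp
  finally have "p \<noteq> 0" by auto
  have "degree p \<le> 2^(n-1)" unfolding p_def
    by (intro degree_sum_le) (auto intro!: order.trans[OF degree_monom_le] power_increasing)
  moreover have "{x. poly p x = 0} = UNIV" using pT all by auto
  then have "CARD('k) \<le> degree p" using card_poly_roots_bound[OF \<open>p \<noteq> 0\<close>] by simp
  ultimately have "(2::nat)^n \<le> 2^(n-1)" using card by linarith
  moreover have "(2::nat)^(n-1) < 2^n" using n2 by (intro power_strict_increasing) auto
  ultimately show False by linarith
qed

lemma tr_nondeg: assumes "\<And>k. \<not> tr n (\<alpha>^k * \<beta>)" shows "\<beta> = 0"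
proof (rule ccontr)
  assume b: "\<beta> \<noteq> 0"
  obtain x0 where x0: "tr n (x0::'k)" using tr_exists by blast
  then have "x0 \<noteq> 0" using tr_zero by auto
  then have "x0 / \<beta> \<noteq> 0" using b by simp
  then obtain i where "\<alpha>^(0+i) = x0 / \<beta>" using prim_cover[OF prim] by blast
  then have "\<alpha>^i * \<beta> = x0" using b by simp
  then show False using assms x0 by metis
qed

end


context fld begin

definition chi :: "'k \<Rightarrow> complex" where "chi x = (if tr n x then -1 else 1)"

lemma chi_add: "chi (x + y) = chi x * chi y"
  by (simp add: chi_def tr_add)

lemma chi_sum: "(\<Sum>x\<in>UNIV. chi x) = 0"
proof -
  obtain x0 where x0: "tr n (x0::'k)" using tr_exists by blast
  have "(\<Sum>x\<in>UNIV. chi (x + x0)) = (\<Sum>x\<in>UNIV. chi x)"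
    by (rule sum.reindex_bij_witness[where j="\<lambda>a. a + x0" and i="\<lambda>b. b - x0"]) auto
  moreover have "(\<Sum>x\<in>UNIV. chi (x + x0)) = - (\<Sum>x\<in>UNIV. chi x)"
    unfolding chi_add sum_negf[symmetric] using x0 by (simp add: chi_def)
  ultimately show ?thesis by simp
qed

lemma chi_sum_mult: assumes "\<beta> \<noteq> 0" shows "(\<Sum>\<gamma>\<in>UNIV. chi (\<gamma> * \<beta>)) = 0"
proof -
  have "(\<Sum>\<gamma>\<in>UNIV. chi (\<gamma> * \<beta>)) = (\<Sum>x\<in>UNIV. chi x)"
    by (rule sum.reindex_bij_witness[where j="\<lambda>a. a * \<beta>" and i="\<lambda>b. b / \<beta>"]) (use assms in auto)
  then show ?thesis using chi_sum by simp
qed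

definition Vb :: "('k \<Rightarrow> complex) \<Rightarrow> bool \<Rightarrow> 'k \<Rightarrow> complex" where
  "Vb C b \<gamma> = (\<Sum>\<beta>\<in>UNIV. C \<beta> * (if tr n (\<gamma> * \<beta>) = b then 1 else 0))"

lemma comb:
  fixes C :: "'k \<Rightarrow> complex"
  assumes C0: "C 0 \<noteq> 0"
  shows "\<exists>\<gamma>. \<gamma> \<noteq> 0 \<and> (\<exists>b. cmod (Vb C b \<gamma>) > cmod (C 0) / 2^n)"
proof (rule ccontr)
  assume "\<not> ?thesis"
  then have bnd: "\<And>\<gamma> b. \<gamma> \<noteq> 0 \<Longrightarrow> cmod (Vb C b \<gamma>) \<le> cmod (C 0) / 2^n"
    by (meson not_le)
  define e where "e = cmod (C 0) / 2^n"
  define D where "D \<gamma> = (\<Sum>\<beta>\<in>UNIV. C \<beta> * chi (\<gamma> * \<beta>))" for \<gamma>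
  have Dsplit: "D \<gamma> = Vb C False \<gamma> - Vb C True \<gamma>" for \<gamma>
    unfolding D_def Vb_def sum_subtractf[symmetric] by (intro sum.cong) (auto simp: chi_def)
  have Ssplit: "(\<Sum>\<beta>\<in>UNIV. C \<beta>) = Vb C False \<gamma> + Vb C True \<gamma>" for \<gamma>
    unfolding Vb_def sum.distrib[symmetric] by (intro sum.cong) auto
  have Dbnd: "cmod (D \<gamma>) \<le> 2 * e" for \<gamma>
  proof (cases "\<gamma> = 0")
    case True
    have "D \<gamma> = (\<Sum>\<beta>\<in>UNIV. C \<beta>)" using True by (simp add: D_def chi_def tr_zero)
    also have "\<dots> = Vb C False 1 + Vb C True 1" by (rule Ssplit)
    finally have "cmod (D \<gamma>) \<le> cmod (Vb C False 1) + cmod (Vb C True 1)"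
      using norm_triangle_ineq by metis
    then show ?thesis using bnd[of 1 False] bnd[of 1 True] by (simp add: e_def)
  next
    case False
    have "cmod (D \<gamma>) \<le> cmod (Vb C False \<gamma>) + cmod (Vb C True \<gamma>)"
      unfolding Dsplit by (rule norm_triangle_ineq4)
    then show ?thesis using bnd[OF False, of False] bnd[OF False, of True] by (simp add: e_def)
  qed
  have "(\<Sum>\<gamma>\<in>UNIV. D \<gamma>) = (\<Sum>\<beta>\<in>UNIV. C \<beta> * (\<Sum>\<gamma>\<in>UNIV. chi (\<gamma> * \<beta>)))"
    unfolding D_def sum_distrib_left by (rule sum.swap)
  also have "\<dots> = (\<Sum>\<beta>\<in>UNIV. if \<beta> = (0::'k) then C 0 * of_nat CARD('k) else 0)"
    by (rule sum.cong[OF refl]) (auto simp: chi_sum_mult, simp add: chi_def tr_zero)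
  also have "\<dots> = C 0 * of_nat CARD('k)" by simp
  finally have sumD: "(\<Sum>\<gamma>\<in>UNIV. D \<gamma>) = C 0 * of_nat CARD('k)" .
  have "cmod (\<Sum>\<gamma>\<in>UNIV. D \<gamma>) \<le> (\<Sum>\<gamma>::'k\<in>UNIV. 2 * e)"
    by (intro order.trans[OF norm_sum] sum_mono Dbnd)
  also have "\<dots> = 2^n * (2 * e)" using card by simp
  also have "\<dots> = 2 * cmod (C 0)" by (simp add: e_def)
  finally have A: "cmod (C 0 * of_nat CARD('k)) \<le> 2 * cmod (C 0)" using sumD by simp
  have "cmod (C 0 * of_nat CARD('k)) = cmod (C 0) * 2^n" using card by (simp add: norm_mult norm_power)
  with A have "cmod (C 0) * 2^n \<le> 2 * cmod (C 0)" by simp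
  moreover have "(4::real) \<le> 2^n"
  proof -
    have "(2::real)^2 \<le> 2^n" using n2 by (intro power_increasing) auto
    then show ?thesis by simp
  qed
  moreover have "cmod (C 0) > 0" using C0 by simp
  ultimately have "cmod (C 0) * 4 \<le> cmod (C 0) * 2^n" "cmod (C 0) > 0"
    by (auto intro!: mult_left_mono)
  then show False using \<open>cmod (C 0) * 2^n \<le> 2 * cmod (C 0)\<close> by linarith
qed

end


definition TA :: "tauto \<Rightarrow> bool" where
  "TA g \<longleftrightarrow> bij g \<and> (\<forall>u. length (g u) = length u) \<and> (\<forall>u k. g (take k u) = take k (g u))"

lemma aact_len: "length (aact u) = length u" by (cases u) auto
lemma aact_take: "aact (take k u) = take k (aact u)" by (cases u; cases k) auto
lemma aact_aact: "aact (aact u) = u" by (cases u) auto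

lemma TA_aact: "TA aact"
proof -
  have "aact \<circ> aact = id" by (auto simp: aact_aact)
  then have "bij aact" by (metis o_bij)
  then show ?thesis by (auto simp: TA_def aact_len aact_take)
qed

lemma iact_len: "length (iact n \<alpha> \<beta> u) = length u"
  by (induction u arbitrary: \<beta>) (auto simp: aact_len)

lemma iact_take: "iact n \<alpha> \<beta> (take k u) = take k (iact n \<alpha> \<beta> u)"
proof (induction u arbitrary: \<beta> k)
  case Nil then show ?case by simp
next
  case (Cons x u) then show ?case by (cases k) (auto simp: aact_take)
qed

lemma iact_iact: "iact n \<alpha> \<beta> (iact n \<alpha> \<beta> u) = u"
  by (induction u arbitrary: \<beta>) (auto simp: aact_aact)

lemma TA_iact: "TA (iact n \<alpha> \<beta>)"
proof -
  have "iact n \<alpha> \<beta> \<circ> iact n \<alpha> \<beta> = id" by (auto simp: iact_iact)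
  then have "bij (iact n \<alpha> \<beta>)" by (metis o_bij)
  then show ?thesis by (auto simp: TA_def iact_len iact_take)
qed

lemma TA_id: "TA id" by (simp add: TA_def)

lemma TA_comp: "TA g \<Longrightarrow> TA h \<Longrightarrow> TA (g \<circ> h)"
  by (auto simp: TA_def bij_comp)

lemma TA_inv: assumes "TA g" shows "TA (inv g)"
proof -
  have b: "bij g" and l: "\<And>u. length (g u) = length u" and t: "\<And>u k. g (take k u) = take k (g u)"
    using assms by (auto simp: TA_def)
  have gi: "g (inv g u) = u" for u using b by (simp add: bij_is_surj surj_f_inv_f)
  have ig: "inv g (g u) = u" for u using b by (simp add: bij_is_inj)
  have "length (inv g u) = length u" for u by (metis gi l)
  moreover have "inv g (take k u) = take k (inv g u)" for u k
    by (metis gi ig t)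
  ultimately show ?thesis using b by (auto simp: TA_def bij_imp_bij_inv)
qed

lemma Ggrp_TA: "g \<in> Ggrp n \<alpha> \<Longrightarrow> TA g"
  by (induction rule: Ggrp.induct) (simp_all only: TA_id TA_aact TA_iact TA_comp TA_inv)

lemma TA_app: assumes "TA g" shows "g (\<epsilon> @ \<delta>) = g \<epsilon> @ restr g \<epsilon> \<delta>"
proof -
  have "take (length \<epsilon>) (g (\<epsilon> @ \<delta>)) = g \<epsilon>"
    using assms unfolding TA_def by (metis append_eq_conv_conj)
  then show ?thesis unfolding restr_def by (metis append_take_drop_id)
qed

lemma restr_app: "restr g (\<epsilon> @ \<delta>) = restr (restr g \<epsilon>) \<delta>"
  by (simp add: restr_def fun_eq_iff add.commute)

lemma ext_rel:
  assumes "TA g" "TA g'" "\<eta> @ g \<epsilon> = \<eta>' @ g' \<epsilon>'" "restr g \<epsilon> = restr g' \<epsilon>'"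
  shows "\<eta> @ g (\<epsilon> @ \<delta>) = \<eta>' @ g' (\<epsilon>' @ \<delta>) \<and> restr g (\<epsilon> @ \<delta>) = restr g' (\<epsilon>' @ \<delta>)"
  using assms by (simp add: TA_app restr_app flip: append_assoc)

lemma length_ptake[simp]: "length (ptake w N) = N" by (simp add: ptake_def)

lemma ptake_take: "N \<le> M \<Longrightarrow> take N (ptake w M) = ptake w N"
  by (simp add: ptake_def take_map)

lemma ptake_split: "N \<le> M \<Longrightarrow> ptake w M = ptake w N @ drop N (ptake w M)"
  by (metis append_take_drop_id ptake_take)

lemma germ_rel_unf: "germ_rel ((\<eta>,g,\<mu>),w) ((\<eta>',g',\<mu>'),w') \<longleftrightarrow> w = w' \<and>
   (\<exists>\<epsilon> \<epsilon>'. \<mu> @ \<epsilon> = \<mu>' @ \<epsilon>' \<and> ptake w (length (\<mu> @ \<epsilon>)) = \<mu> @ \<epsilon>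
        \<and> \<eta> @ g \<epsilon> = \<eta>' @ g' \<epsilon>' \<and> restr g \<epsilon> = restr g' \<epsilon>')"
  by (simp add: germ_rel_def)

lemma germ_rel_sym: "germ_rel ((\<eta>,g,\<mu>),w) ((\<eta>',g',\<mu>'),w') \<Longrightarrow> germ_rel ((\<eta>',g',\<mu>'),w') ((\<eta>,g,\<mu>),w)"
  unfolding germ_rel_unf by (metis length_append)

lemma germ_rel_refl: "w \<in> cyl \<mu> \<Longrightarrow> germ_rel ((\<eta>,g,\<mu>),w) ((\<eta>,g,\<mu>),w)"
  unfolding germ_rel_unf by (rule conjI, simp, rule exI[of _ "[]"], rule exI[of _ "[]"]) (simp add: cyl_def)

lemma germ_rel_trans:
  assumes T1: "TA g1" and T2: "TA g2" and T3: "TA g3"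
    and R1: "germ_rel ((\<eta>1,g1,\<mu>1),w1) ((\<eta>2,g2,\<mu>2),w2)"
    and R2: "germ_rel ((\<eta>2,g2,\<mu>2),w2) ((\<eta>3,g3,\<mu>3),w3)"
  shows "germ_rel ((\<eta>1,g1,\<mu>1),w1) ((\<eta>3,g3,\<mu>3),w3)"
proof -
  obtain \<epsilon>1 \<epsilon>2 where w12: "w1 = w2" and a1: "\<mu>1 @ \<epsilon>1 = \<mu>2 @ \<epsilon>2"
    and a2: "ptake w1 (length (\<mu>1 @ \<epsilon>1)) = \<mu>1 @ \<epsilon>1"
    and a3: "\<eta>1 @ g1 \<epsilon>1 = \<eta>2 @ g2 \<epsilon>2" and a4: "restr g1 \<epsilon>1 = restr g2 \<epsilon>2"
    using R1 unfolding germ_rel_unf by blast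
  obtain \<epsilon>2' \<epsilon>3 where w23: "w2 = w3" and b1: "\<mu>2 @ \<epsilon>2' = \<mu>3 @ \<epsilon>3"
    and b2: "ptake w2 (length (\<mu>2 @ \<epsilon>2')) = \<mu>2 @ \<epsilon>2'"
    and b3: "\<eta>2 @ g2 \<epsilon>2' = \<eta>3 @ g3 \<epsilon>3" and b4: "restr g2 \<epsilon>2' = restr g3 \<epsilon>3"
    using R2 unfolding germ_rel_unf by blast
  define w where "w = w1"
  define N1 where "N1 = length (\<mu>1 @ \<epsilon>1)"
  define N2 where "N2 = length (\<mu>2 @ \<epsilon>2')"
  have p1: "ptake w N1 = \<mu>2 @ \<epsilon>2" using a1 a2 by (simp add: w_def N1_def)
  have p2: "ptake w N2 = \<mu>2 @ \<epsilon>2'" using b2 w12 by (simp add: w_def N2_def)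
  show ?thesis
  proof (cases "N1 \<le> N2")
    case True
    define \<delta> where "\<delta> = drop N1 (ptake w N2)"
    have "ptake w N2 = ptake w N1 @ \<delta>" using ptake_split[OF True] by (simp add: \<delta>_def)
    then have e: "\<epsilon>2' = \<epsilon>2 @ \<delta>" using p1 p2 by simp
    from ext_rel[OF T1 T2 a3 a4, of \<delta>]
    have c: "\<eta>1 @ g1 (\<epsilon>1 @ \<delta>) = \<eta>3 @ g3 \<epsilon>3" "restr g1 (\<epsilon>1 @ \<delta>) = restr g3 \<epsilon>3"
      using b3 b4 e by auto
    have d: "\<mu>1 @ \<epsilon>1 @ \<delta> = \<mu>3 @ \<epsilon>3" using a1 b1 e by (metis append_assoc)
    have "ptake w (length (\<mu>1 @ \<epsilon>1 @ \<delta>)) = \<mu>1 @ \<epsilon>1 @ \<delta>"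
      using d b1 p2 by (metis length_ptake)
    then show ?thesis unfolding germ_rel_unf using c d w12 w23 w_def by blast
  next
    case False
    then have le: "N2 \<le> N1" by simp
    define \<delta> where "\<delta> = drop N2 (ptake w N1)"
    have "ptake w N1 = ptake w N2 @ \<delta>" using ptake_split[OF le] by (simp add: \<delta>_def)
    then have e: "\<epsilon>2 = \<epsilon>2' @ \<delta>" using p1 p2 by simp
    from ext_rel[OF T2 T3 b3 b4, of \<delta>]
    have c: "\<eta>1 @ g1 \<epsilon>1 = \<eta>3 @ g3 (\<epsilon>3 @ \<delta>)" "restr g1 \<epsilon>1 = restr g3 (\<epsilon>3 @ \<delta>)"
      using a3 a4 e by auto
    have d: "\<mu>1 @ \<epsilon>1 = \<mu>3 @ \<epsilon>3 @ \<delta>" using a1 b1 e by (metis append_assoc)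
    then show ?thesis unfolding germ_rel_unf using c d a2 w12 w23 by blast
  qed
qed

lemma germ_of_eq:
  assumes V1: "valid_rep n \<alpha> ((\<eta>,g,\<mu>),w)" and V2: "valid_rep n \<alpha> ((\<eta>',g',\<mu>'),w')"
  shows "germ_of n \<alpha> ((\<eta>,g,\<mu>),w) = germ_of n \<alpha> ((\<eta>',g',\<mu>'),w') \<longleftrightarrow>
         germ_rel ((\<eta>,g,\<mu>),w) ((\<eta>',g',\<mu>'),w')"
proof
  assume "germ_of n \<alpha> ((\<eta>,g,\<mu>),w) = germ_of n \<alpha> ((\<eta>',g',\<mu>'),w')"
  moreover have "((\<eta>',g',\<mu>'),w') \<in> germ_of n \<alpha> ((\<eta>',g',\<mu>'),w')"
    using V2 germ_rel_refl by (auto simp: germ_of_def valid_rep_def)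
  ultimately show "germ_rel ((\<eta>,g,\<mu>),w) ((\<eta>',g',\<mu>'),w')" by (auto simp: germ_of_def)
next
  assume R: "germ_rel ((\<eta>,g,\<mu>),w) ((\<eta>',g',\<mu>'),w')"
  have T: "TA g" "TA g'" using V1 V2 Ggrp_TA by (auto simp: valid_rep_def)
  have R': "germ_rel ((\<eta>',g',\<mu>'),w') ((\<eta>,g,\<mu>),w)" using germ_rel_sym[OF R] .
  show "germ_of n \<alpha> ((\<eta>,g,\<mu>),w) = germ_of n \<alpha> ((\<eta>',g',\<mu>'),w')"
  proof (intro set_eqI iffI)
    fix x assume "x \<in> germ_of n \<alpha> ((\<eta>,g,\<mu>),w)"
    moreover obtain a b c d where x: "x = ((a,b,c),d)" by (metis prod.exhaust)
    ultimately have "valid_rep n \<alpha> ((a,b,c),d)" "germ_rel ((\<eta>,g,\<mu>),w) ((a,b,c),d)"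
      by (auto simp: germ_of_def)
    moreover then have "TA b" using Ggrp_TA by (auto simp: valid_rep_def)
    ultimately show "x \<in> germ_of n \<alpha> ((\<eta>',g',\<mu>'),w')"
      using germ_rel_trans[OF T(2) T(1) _ R'] x by (auto simp: germ_of_def)
  next
    fix x assume "x \<in> germ_of n \<alpha> ((\<eta>',g',\<mu>'),w')"
    moreover obtain a b c d where x: "x = ((a,b,c),d)" by (metis prod.exhaust)
    ultimately have "valid_rep n \<alpha> ((a,b,c),d)" "germ_rel ((\<eta>',g',\<mu>'),w') ((a,b,c),d)"
      by (auto simp: germ_of_def)
    moreover then have "TA b" using Ggrp_TA by (auto simp: valid_rep_def)
    ultimately show "x \<in> germ_of n \<alpha> ((\<eta>,g,\<mu>),w)"
      using germ_rel_trans[OF T(1) T(2) _ R] x by (auto simp: germ_of_def)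
  qed
qed



context fld begin

lemma iact_ones: "iact n \<alpha> \<beta> (replicate j True @ v) = replicate j True @ iact n \<alpha> (\<alpha>^j * \<beta>) v"
  by (induction j arbitrary: \<beta>) (auto simp: algebra_simps)

lemma iact_flip: "iact n \<alpha> \<beta> (replicate k True @ False # v) =
   replicate k True @ False # (if tr n (\<alpha>^k * \<beta>) then aact v else v)"
  by (simp add: iact_ones)

lemma restr_ones: "restr (iact n \<alpha> \<beta>) (replicate j True) = iact n \<alpha> (\<alpha>^j * \<beta>)"
  by (simp add: restr_def iact_ones fun_eq_iff)

lemma restr_flip: "restr (iact n \<alpha> \<beta>) (replicate k True @ [False]) =
   (\<lambda>v. if tr n (\<alpha>^k * \<beta>) then aact v else v)"
  by (simp add: restr_def iact_flip fun_eq_iff)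

lemma iact0: "iact n \<alpha> 0 = id"
proof -
  have "iact n \<alpha> 0 u = u" for u by (induction u) (auto simp: tr_zero)
  then show ?thesis by auto
qed

lemma iact_inj: assumes "iact n \<alpha> \<beta> = iact n \<alpha> \<beta>'" shows "\<beta> = \<beta>'"
proof -
  have "tr n (\<alpha>^k * \<beta>) = tr n (\<alpha>^k * \<beta>')" for k
  proof -
    have "iact n \<alpha> \<beta> (replicate k True @ [False, False]) = iact n \<alpha> \<beta>' (replicate k True @ [False, False])"
      using assms by simp
    then show ?thesis by (simp add: iact_flip split: if_splits)
  qed
  then have "\<not> tr n (\<alpha>^k * (\<beta> - \<beta>'))" for k by (simp add: right_diff_distrib tr_diff)
  then have "\<beta> - \<beta>' = 0" by (rule tr_nondeg)
  then show ?thesis by simp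
qed

lemma valid_simple: "valid_rep n \<alpha> (([], iact n \<alpha> \<beta>, []), w)"
  by (simp add: valid_rep_def cyl_def ptake_def Ggrp.grp_iota)

lemma rel_simple: "germ_rel (([],h,[]),w) (([],g,[]),w') \<longleftrightarrow> w = w' \<and>
   (\<exists>\<epsilon>. ptake w (length \<epsilon>) = \<epsilon> \<and> h \<epsilon> = g \<epsilon> \<and> restr h \<epsilon> = restr g \<epsilon>)"
  by (simp add: germ_rel_unf)

lemma ptake_Suc: "ptake w (Suc N) = ptake w N @ [w N]" by (simp add: ptake_def)

lemma rel_flip:
  assumes w: "w \<in> cyl (replicate k True @ [False])"
  shows "germ_rel (([],iact n \<alpha> \<beta>0,[]),w) (([],iact n \<alpha> \<beta>,[]),w) \<longleftrightarrow>
         (tr n (\<alpha>^k * \<beta>0) = tr n (\<alpha>^k * \<beta>))"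
proof
  assume "tr n (\<alpha>^k * \<beta>0) = tr n (\<alpha>^k * \<beta>)"
  moreover have "ptake w (length (replicate k True @ [False])) = replicate k True @ [False]"
    using w by (simp add: cyl_def)
  ultimately show "germ_rel (([],iact n \<alpha> \<beta>0,[]),w) (([],iact n \<alpha> \<beta>,[]),w)"
    unfolding rel_simple
    by (intro conjI exI[of _ "replicate k True @ [False]"]) (simp_all add: restr_flip iact_flip)
next
  assume "germ_rel (([],iact n \<alpha> \<beta>0,[]),w) (([],iact n \<alpha> \<beta>,[]),w)"
  then obtain \<epsilon> where e1: "ptake w (length \<epsilon>) = \<epsilon>" and e2: "iact n \<alpha> \<beta>0 \<epsilon> = iact n \<alpha> \<beta> \<epsilon>"
    and e3: "restr (iact n \<alpha> \<beta>0) \<epsilon> = restr (iact n \<alpha> \<beta>) \<epsilon>"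
    unfolding rel_simple by blast
  define M where "M = max (length \<epsilon>) (k+2)"
  define \<delta> where "\<delta> = drop (length \<epsilon>) (ptake w M)"
  have "ptake w M = \<epsilon> @ \<delta>" using ptake_split[of "length \<epsilon>" M w] e1 by (simp add: M_def \<delta>_def)
  then have eq: "iact n \<alpha> \<beta>0 (ptake w M) = iact n \<alpha> \<beta> (ptake w M)"
    using e2 e3 by (simp add: TA_app[OF TA_iact])
  have "ptake w M = ptake w (k+2) @ drop (k+2) (ptake w M)"
    by (rule ptake_split) (simp add: M_def)
  moreover have "ptake w (k+2) = replicate k True @ [False, w (Suc k)]"
    using w by (simp add: cyl_def ptake_Suc[of w "Suc k"])
  ultimately have pm: "ptake w M = replicate k True @ False # w (Suc k) # drop (k+2) (ptake w M)"
    by simp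
  define r where "r = drop (k+2) (ptake w M)"
  have "iact n \<alpha> \<beta>0 (replicate k True @ False # w (Suc k) # r) = iact n \<alpha> \<beta> (replicate k True @ False # w (Suc k) # r)"
    using eq pm unfolding r_def by metis
  then show "tr n (\<alpha>^k * \<beta>0) = tr n (\<alpha>^k * \<beta>)"
    by (simp add: iact_flip split: if_splits)
qed

lemma ptake_ones: "ptake ones N = replicate N True"
  by (simp add: ptake_def ones_def map_replicate_const)

lemma rel_ones: "germ_rel (([],iact n \<alpha> 0,[]),ones) (([],iact n \<alpha> \<beta>,[]),ones) \<longleftrightarrow> \<beta> = 0"
proof
  assume "germ_rel (([],iact n \<alpha> 0,[]),ones) (([],iact n \<alpha> \<beta>,[]),ones)"
  then obtain \<epsilon> where e1: "ptake ones (length \<epsilon>) = \<epsilon>"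
    and e3: "restr (iact n \<alpha> 0) \<epsilon> = restr (iact n \<alpha> \<beta>) \<epsilon>"
    unfolding rel_simple by blast
  have "\<epsilon> = replicate (length \<epsilon>) True" using e1 by (simp add: ptake_ones)
  then have "iact n \<alpha> (\<alpha>^length \<epsilon> * 0) = iact n \<alpha> (\<alpha>^length \<epsilon> * \<beta>)"
    using e3 by (metis restr_ones)
  then have "\<alpha>^length \<epsilon> * \<beta> = 0" using iact_inj by (metis mult_zero_right)
  moreover have "\<alpha> \<noteq> 0" using prim by (simp add: primitive_elem_def)
  ultimately show "\<beta> = 0" by simp
next
  assume "\<beta> = 0"
  then show "germ_rel (([],iact n \<alpha> 0,[]),ones) (([],iact n \<alpha> \<beta>,[]),ones)"
    using germ_rel_refl[of ones "[]" "[]" "iact n \<alpha> 0"] by (simp add: cyl_def ptake_def)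
qed

lemma mem_Um:
  "germ_of n \<alpha> (([], iact n \<alpha> \<beta>0, []), w) \<in> Um n \<alpha> m (iact n \<alpha> \<beta>) \<longleftrightarrow>
   w \<in> cyl (replicate m True) \<and> germ_rel (([],iact n \<alpha> \<beta>0,[]),w) (([],iact n \<alpha> \<beta>,[]),w)"
proof -
  have "germ_of n \<alpha> (([], iact n \<alpha> \<beta>0, []), w) \<in> Um n \<alpha> m (iact n \<alpha> \<beta>) \<longleftrightarrow>
        (\<exists>w'. w' \<in> cyl (replicate m True) \<and> germ_rel (([],iact n \<alpha> \<beta>0,[]),w) (([],iact n \<alpha> \<beta>,[]),w'))"
    unfolding Um_def Theta_def using germ_of_eq[OF valid_simple valid_simple] by blast
  also have "\<dots> \<longleftrightarrow> w \<in> cyl (replicate m True) \<and> germ_rel (([],iact n \<alpha> \<beta>0,[]),w) (([],iact n \<alpha> \<beta>,[]),w)"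
    by (auto simp: rel_simple)
  finally show ?thesis .
qed

end



lemma cyl_mono:
  assumes "w \<in> cyl (replicate k True @ [False])" "m \<le> k"
  shows "w \<in> cyl (replicate m True)"
proof -
  have "ptake w m = take m (ptake w (Suc k))" using assms(2) by (simp add: ptake_take)
  also have "\<dots> = take m (replicate k True @ [False])" using assms(1) by (simp add: cyl_def)
  also have "\<dots> = replicate m True" using assms(2) by simp
  finally show ?thesis by (simp add: cyl_def)
qed

lemma cyl_nonempty: "(\<lambda>i. i < k) \<in> cyl (replicate k True @ [False])"
proof -
  have "map (\<lambda>i. i < k) [0..<k] = replicate k True"
    by (rule nth_equalityI) auto
  then show ?thesis by (simp add: cyl_def ptake_def)
qed

lemma openX_cyl: "openX (cyl \<eta>)"
  unfolding openX_def by (auto simp: cyl_def intro!: exI[of _ "length \<eta>"])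

lemma basis_open:
  assumes "g \<in> Ggrp n \<alpha>"
  shows "openin (Gtop n \<alpha>) (Theta n \<alpha> ([], g, []) (cyl \<eta>))"
proof -
  have "Theta n \<alpha> ([], g, []) (cyl \<eta>) \<in> basis n \<alpha>"
    unfolding basis_def using assms openX_cyl by (fastforce simp: cyl_def ptake_def)
  then show ?thesis unfolding Gtop_def openin_topology_generated_by_iff
    by (rule generate_topology_on.Basis)
qed

theorem mainTheorem11:
  fixes n :: nat and \<alpha> :: "'k::{field,finite}"
    and f :: "germ \<Rightarrow> complex" and m :: nat and c :: "tauto \<Rightarrow> complex"
  assumes "n \<ge> 2" and "CARD('k) = 2 ^ n" and "primitive_elem \<alpha>"
    and "f \<in> AC n \<alpha>"
    and "f = (\<lambda>x. \<Sum>g \<in> N0 n \<alpha>. c g * indicator (Um n \<alpha> m g) x)"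
    and "f (z_germ n \<alpha> (iact n \<alpha> 0)) \<noteq> 0"
  shows "(\<exists>V. Gtop n \<alpha> interior_of V \<noteq> {} \<and>
            (\<forall>z\<in>V. cmod (f z) > cmod (f (z_germ n \<alpha> (iact n \<alpha> 0))) / 2 ^ n))
         \<and> f \<notin> SC n \<alpha>"
proof -
  interpret fld n \<alpha> using assms(1-3) by unfold_locales
  define C where "C \<beta> = c (iact n \<alpha> \<beta>)" for \<beta>
  have inj: "inj (iact n \<alpha>)" by (rule injI) (rule iact_inj)
  have fsum: "f x = (\<Sum>\<beta>\<in>UNIV. C \<beta> * indicator (Um n \<alpha> m (iact n \<alpha> \<beta>)) x)" for x
    unfolding assms(5) N0_def C_def by (simp add: sum.reindex[OF inj])
  have "ones \<in> cyl (replicate m True)" by (simp add: cyl_def ptake_ones)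
  then have ind0: "indicator (Um n \<alpha> m (iact n \<alpha> \<beta>)) (z_germ n \<alpha> (iact n \<alpha> 0)) = (if \<beta> = 0 then 1 else (0::complex))" for \<beta>
    unfolding z_germ_def by (simp add: mem_Um rel_ones)
  have fze: "f (z_germ n \<alpha> (iact n \<alpha> 0)) = C 0"
    unfolding fsum ind0 by (simp add: if_distrib cong: if_cong)
  then have "C 0 \<noteq> 0" using assms(6) by simp
  from comb[of C, OF this] obtain \<gamma> b where g0: "\<gamma> \<noteq> 0" and big: "cmod (Vb C b \<gamma>) > cmod (C 0) / 2^n"
    by blast
  have nn: "0 \<le> cmod (C 0) / 2^n" by simp
  with big have "Vb C b \<gamma> \<noteq> 0" by (auto simp del: divide_le_0_iff) (use nn in linarith)
  have "\<exists>\<beta>0. tr n (\<gamma> * \<beta>0) = b"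
  proof (rule ccontr)
    assume "\<not> ?thesis"
    then have "Vb C b \<gamma> = 0" unfolding Vb_def by auto
    with \<open>Vb C b \<gamma> \<noteq> 0\<close> show False by simp
  qed
  then obtain \<beta>0 where b0: "tr n (\<gamma> * \<beta>0) = b" by blast
  obtain i where "\<alpha>^(m+i) = \<gamma>" using prim_cover[OF prim g0] by blast
  define k where "k = m + i"
  have ak: "\<alpha>^k = \<gamma>" using \<open>\<alpha>^(m+i) = \<gamma>\<close> k_def by simp
  define V where "V = Theta n \<alpha> ([], iact n \<alpha> \<beta>0, []) (cyl (replicate k True @ [False]))"
  have Vopen: "openin (Gtop n \<alpha>) V" unfolding V_def by (rule basis_open) (rule Ggrp.grp_iota)
  have Vne: "V \<noteq> {}" unfolding V_def Theta_def using cyl_nonempty by blast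
  have Vval: "\<forall>z\<in>V. cmod (f z) > cmod (f (z_germ n \<alpha> (iact n \<alpha> 0))) / 2 ^ n"
  proof
    fix z assume "z \<in> V"
    then obtain w where z: "z = germ_of n \<alpha> (([], iact n \<alpha> \<beta>0, []), w)"
      and w: "w \<in> cyl (replicate k True @ [False])" unfolding V_def Theta_def by blast
    have wm: "w \<in> cyl (replicate m True)" using cyl_mono[OF w] k_def by simp
    have "indicator (Um n \<alpha> m (iact n \<alpha> \<beta>)) z = (if tr n (\<gamma> * \<beta>) = b then 1 else (0::complex))" for \<beta>
      unfolding z using wm rel_flip[OF w, of \<beta>0 \<beta>] b0 ak by (auto simp: mem_Um)
    then have "f z = Vb C b \<gamma>" unfolding fsum Vb_def by simp
    then show "cmod (f z) > cmod (f (z_germ n \<alpha> (iact n \<alpha> 0))) / 2 ^ n" using big fze by simp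
  qed
  have int: "Gtop n \<alpha> interior_of V = V" using Vopen by (rule interior_of_openin)
  have "f \<notin> SC n \<alpha>"
  proof
    assume "f \<in> SC n \<alpha>"
    then have e: "Gtop n \<alpha> interior_of {x. f x \<noteq> 0} = {}" by (simp add: SC_def)
    have "V \<subseteq> {x. f x \<noteq> 0}"
    proof
      fix z assume "z \<in> V"
      then have "cmod (f z) > cmod (f (z_germ n \<alpha> (iact n \<alpha> 0))) / 2 ^ n" using Vval by blast
      moreover have "0 \<le> cmod (f (z_germ n \<alpha> (iact n \<alpha> 0))) / 2 ^ n" by simp
      ultimately have "cmod (f z) > 0" by linarith
      then show "z \<in> {x. f x \<noteq> 0}" by auto
    qed
    then have "Gtop n \<alpha> interior_of V \<subseteq> {}" using interior_of_mono e by metis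
    then show False using int Vne by simp
  qed
  then show ?thesis using int Vne Vval by blast
qed

end
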